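(* Let $1\le k\le m$ and let $\phi_{m,k}$ be the automorphism of the free group $F_{m+k}=F(A_1,\dots,A_m,B_1,\dots,B_k)$ described below. Then $\operatorname{gr}_{\phi_{m,k}}(n)\preceq n^k$ and $\operatorname{gr}_{(\phi_{m,k})^{-1}}(n)\preceq n^k$.
   Context: $\phi_{m,k}(A_i)=A_1\cdots A_{i-1}A_iA_{i-1}^{-1}\cdots A_1^{-1}$ for $1\le i\le m$, and $\phi_{m,k}(B_j)=A_1\cdots A_m(B_1\cdots B_j)A_{j-1}^{-1}\cdots A_1^{-1}$ for $1\le j\le k$. $\operatorname{gr}_\psi(n)=\max_{x}\|\psi^n(x)\|$ over the free basis, $\|\cdot\|$ being word length. $f\preceq g$ means $f(n)\le Ag(n)+B$ for some $A>0,B\ge0$ and all $n$. *)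

theory Defs
  imports Complex_Main
begin

text \<open>A letter is (g, e) where g is the
generator index and e = True means the inverse of the generator.
Elements of the free group are represented by freely reduced words.\<close>

type_synonym letter = "nat \<times> bool"

definition inv_letter :: "letter \<Rightarrow> letter" where
  "inv_letter x = (fst x, \<not> snd x)"

definition inv_word :: "letter list \<Rightarrow> letter list" where
  "inv_word w = rev (map inv_letter w)"

definition red_step :: "letter \<Rightarrow> letter list \<Rightarrow> letter list" where
  "red_step x acc = (case acc of [] \<Rightarrow> [x]
      | y # ys \<Rightarrow> (if y = inv_letter x then ys else x # acc))"

definition reduce :: "letter list \<Rightarrow> letter list" where
  "reduce w = foldr red_step w []"

definition subst :: "(nat \<Rightarrow> letter list) \<Rightarrow> letter list \<Rightarrow> letter list" where
  "subst f w = reduce (concat (map (\<lambda>x. if snd x then inv_word (f (fst x)) else f (fst x)) w))"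

definition iter_len :: "(nat \<Rightarrow> letter list) \<Rightarrow> nat \<Rightarrow> nat \<Rightarrow> nat" where
  "iter_len f n g = length ((subst f ^^ n) [(g, False)])"

definition growth :: "(nat \<Rightarrow> letter list) \<Rightarrow> nat \<Rightarrow> nat \<Rightarrow> nat" where
  "growth f N n = Max ((iter_len f n) ` {..<N})"

definition dominated :: "(nat \<Rightarrow> real) \<Rightarrow> (nat \<Rightarrow> real) \<Rightarrow> bool" where
  "dominated f g \<longleftrightarrow> (\<exists>A B. A > 0 \<and> B \<ge> 0 \<and> (\<forall>n. f n \<le> A * g n + B))"

text \<open>Generators of F_{m+k}: A_i (1 \<le> i \<le> m) is index i-1, B_j (1 \<le> j \<le> k) is index m+j-1.\<close>
definition genA :: "nat \<Rightarrow> letter" where "genA i = (i - 1, False)"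
definition genAinv :: "nat \<Rightarrow> letter" where "genAinv i = (i - 1, True)"
definition genB :: "nat \<Rightarrow> nat \<Rightarrow> letter" where "genB m j = (m + j - 1, False)"

text \<open>phi_{m,k}: A_i \<mapsto> A_1..A_{i-1} A_i A_{i-1}^{-1}..A_1^{-1};
  B_j \<mapsto> A_1..A_m (B_1..B_j) A_{j-1}^{-1}..A_1^{-1}; other generators fixed
  (irrelevant, they are not in F_{m+k}).\<close>
definition phi :: "nat \<Rightarrow> nat \<Rightarrow> nat \<Rightarrow> letter list" where
  "phi m k g =
    (if g < m then
       (let i = g + 1 in map genA [1..<i] @ [genA i] @ map genAinv (rev [1..<i]))
     else if g < m + k then
       (let j = g - m + 1 in map genA [1..<m+1] @ map (genB m) [1..<j+1] @ map genAinv (rev [1..<j]))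
     else [(g, False)])"

definition inverse_on :: "nat \<Rightarrow> (nat \<Rightarrow> letter list) \<Rightarrow> (nat \<Rightarrow> letter list) \<Rightarrow> bool" where
  "inverse_on N f \<psi> \<longleftrightarrow>
     (\<forall>g<N. subst \<psi> (f g) = [(g, False)] \<and> subst f (\<psi> g) = [(g, False)])"

end

theory Submission
  imports Defs
begin


fun rd :: "letter list \<Rightarrow> bool" where
  "rd [] = True"
| "rd [x] = True"
| "rd (x # y # ys) = (y \<noteq> inv_letter x \<and> rd (y # ys))"

lemma inv_letter_inv[simp]: "inv_letter (inv_letter x) = x"
  by (simp add: inv_letter_def)

lemma inv_letter_pair[simp]: "inv_letter (a, b) = (a, \<not> b)"
  by (simp add: inv_letter_def)

lemma inv_word_Nil[simp]: "inv_word [] = []" by (simp add: inv_word_def)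
lemma inv_word_Cons[simp]: "inv_word (x # w) = inv_word w @ [inv_letter x]"
  by (simp add: inv_word_def)
lemma inv_word_append[simp]: "inv_word (u @ v) = inv_word v @ inv_word u"
  by (simp add: inv_word_def)
lemma inv_word_inv[simp]: "inv_word (inv_word w) = w"
  by (simp add: inv_word_def rev_map comp_def)
lemma length_inv_word[simp]: "length (inv_word w) = length w"
  by (simp add: inv_word_def)

lemma rd_red_step: "rd acc \<Longrightarrow> rd (red_step x acc)"
  by (cases acc rule: rd.cases) (auto simp: red_step_def)

lemma reduce_Nil[simp]: "reduce [] = []" by (simp add: reduce_def)
lemma reduce_Cons: "reduce (x # w) = red_step x (reduce w)" by (simp add: reduce_def)

lemma rd_reduce: "rd (reduce w)"
  by (induct w) (auto simp: reduce_Cons rd_red_step)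

lemma red_step_cancel:
  assumes "rd acc" shows "red_step x (red_step (inv_letter x) acc) = acc"
proof (cases acc)
  case Nil then show ?thesis by (simp add: red_step_def)
next
  case (Cons y ys)
  show ?thesis
  proof (cases "y = x")
    case True
    then show ?thesis using assms Cons
      by (cases ys) (auto simp: red_step_def)
  next
    case False
    then show ?thesis using Cons by (simp add: red_step_def)
  qed
qed

lemma reduce_append: "reduce (u @ v) = foldr red_step u (reduce v)"
  by (simp add: reduce_def)

lemma reduce_reduce_left: "reduce (reduce u @ v) = reduce (u @ v)"
proof (induct u)
  case Nil then show ?case by simp
next
  case (Cons x u)
  show ?case
  proof (cases "\<exists>ys. reduce u = inv_letter x # ys")
    case True
    then obtain ys where ys: "reduce u = inv_letter x # ys" by blast
    have "reduce ((x # u) @ v) = red_step x (reduce (u @ v))" by (simp add: reduce_Cons)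
    also have "\<dots> = red_step x (reduce (reduce u @ v))" using Cons by simp
    also have "\<dots> = red_step x (red_step (inv_letter x) (reduce (ys @ v)))"
      by (simp add: ys reduce_Cons)
    also have "\<dots> = reduce (ys @ v)" by (rule red_step_cancel[OF rd_reduce])
    also have "\<dots> = reduce (reduce (x # u) @ v)"
      by (simp add: reduce_Cons ys red_step_def)
    finally show ?thesis by simp
  next
    case False
    then have "red_step x (reduce u) = x # reduce u"
      by (cases "reduce u") (auto simp: red_step_def)
    then show ?thesis using Cons by (simp add: reduce_Cons)
  qed
qed

lemma reduce_reduce[simp]: "reduce (reduce u) = reduce u"
  using reduce_reduce_left[of u "[]"] by simp

lemma reduce_reduce_right: "reduce (u @ reduce v) = reduce (u @ v)"
  by (simp add: reduce_append)

lemma reduce_mid: "reduce (u @ reduce v @ w) = reduce (u @ v @ w)"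
  by (metis reduce_reduce_left reduce_reduce_right)

lemma cong_mid: "reduce a = reduce b \<Longrightarrow> reduce (u @ a @ v) = reduce (u @ b @ v)"
  by (metis reduce_mid)

lemma reduce_inv_right[simp]: "reduce (w @ inv_word w) = []"
proof (induct w)
  case Nil then show ?case by simp
next
  case (Cons x w)
  have "reduce ((x # w) @ inv_word (x # w)) = red_step x (reduce (w @ inv_word w @ [inv_letter x]))"
    by (simp add: reduce_Cons)
  also have "reduce (w @ inv_word w @ [inv_letter x]) = reduce (reduce (w @ inv_word w) @ [inv_letter x])"
    by (metis append.assoc reduce_reduce_left)
  also have "\<dots> = [inv_letter x]" using Cons by (simp add: reduce_Cons red_step_def)
  finally show ?case by (simp add: red_step_def)
qed

lemma reduce_inv_left[simp]: "reduce (inv_word w @ w) = []"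
  using reduce_inv_right[of "inv_word w"] by simp

lemma cancel1: "reduce (u @ w @ inv_word w @ v) = reduce (u @ v)"
  using reduce_mid[of u "w @ inv_word w" v] by simp

lemma cancel2: "reduce (u @ inv_word w @ w @ v) = reduce (u @ v)"
  using reduce_mid[of u "inv_word w @ w" v] by simp

lemma length_reduce: "length (reduce w) \<le> length w"
proof (induct w)
  case Nil then show ?case by simp
next
  case (Cons x w) then show ?case
    by (cases "reduce w") (auto simp: reduce_Cons red_step_def)
qed

lemma set_reduce: "set (reduce w) \<subseteq> set w"
proof (induct w)
  case Nil then show ?case by simp
next
  case (Cons x w) then show ?case
    by (cases "reduce w") (auto simp: reduce_Cons red_step_def)
qed

lemma reduce_inv_reduce: "reduce (inv_word (reduce x)) = reduce (inv_word x)"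
proof -
  have "reduce (inv_word x) = reduce (inv_word x @ reduce x @ inv_word (reduce x))"
    using reduce_mid[of "inv_word x" "reduce x @ inv_word (reduce x)" "[]"] by simp
  also have "\<dots> = reduce (inv_word x @ x @ inv_word (reduce x))" by (rule reduce_mid)
  also have "\<dots> = reduce (inv_word (reduce x))" using cancel2[of "[]" x] by simp
  finally show ?thesis by simp
qed

lemma cong_inv: "reduce a = reduce b \<Longrightarrow> reduce (inv_word a) = reduce (inv_word b)"
  by (metis reduce_inv_reduce)

lemma reduce_single[simp]: "reduce [x] = [x]"
  by (simp add: reduce_Cons red_step_def)



definition img :: "(nat \<Rightarrow> letter list) \<Rightarrow> letter \<Rightarrow> letter list" where
  "img f x = (if snd x then inv_word (f (fst x)) else f (fst x))"

definition im :: "(nat \<Rightarrow> letter list) \<Rightarrow> letter list \<Rightarrow> letter list" where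
  "im f w = concat (map (img f) w)"

lemma img_eq: "img f = (\<lambda>x. if snd x then inv_word (f (fst x)) else f (fst x))"
  by (rule ext) (simp add: img_def)

lemma subst_im: "subst f w = reduce (im f w)"
  by (simp add: subst_def im_def img_eq)

lemma im_Nil[simp]: "im f [] = []" by (simp add: im_def)
lemma im_Cons: "im f (x # w) = img f x @ im f w" by (simp add: im_def)
lemma im_append[simp]: "im f (u @ v) = im f u @ im f v" by (simp add: im_def)
lemma im_pos[simp]: "im f [(g, False)] = f g" by (simp add: im_def img_def)
lemma im_neg[simp]: "im f [(g, True)] = inv_word (f g)" by (simp add: im_def img_def)
lemma im_Cons_pos[simp]: "im f ((g, False) # w) = f g @ im f w" by (simp add: im_def img_def)
lemma im_Cons_neg[simp]: "im f ((g, True) # w) = inv_word (f g) @ im f w" by (simp add: im_def img_def)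

lemma img_inv: "img f (inv_letter x) = inv_word (img f x)"
  by (simp add: img_def inv_letter_def)

lemma im_inv[simp]: "im f (inv_word w) = inv_word (im f w)"
  by (induct w) (simp_all add: im_Cons img_inv im_def)

lemma im_reduce: "reduce (im f (reduce w)) = reduce (im f w)"
proof (induct w)
  case Nil then show ?case by simp
next
  case (Cons x w)
  show ?case
  proof (cases "\<exists>ys. reduce w = inv_letter x # ys")
    case True
    then obtain ys where ys: "reduce w = inv_letter x # ys" by blast
    have "reduce (im f (x # w)) = reduce (img f x @ reduce (im f w))"
      by (simp add: im_Cons reduce_reduce_right)
    also have "\<dots> = reduce (img f x @ reduce (im f (reduce w)))" using Cons by simp
    also have "\<dots> = reduce (img f x @ inv_word (img f x) @ im f ys)"
      by (simp add: reduce_reduce_right ys im_Cons img_inv)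
    also have "\<dots> = reduce (im f ys)" using cancel1[of "[]"] by simp
    also have "\<dots> = reduce (im f (reduce (x # w)))"
      by (simp add: reduce_Cons ys red_step_def)
    finally show ?thesis by simp
  next
    case False
    then have "red_step x (reduce w) = x # reduce w"
      by (cases "reduce w") (auto simp: red_step_def)
    then have "reduce (im f (reduce (x # w))) = reduce (img f x @ im f (reduce w))"
      by (simp add: reduce_Cons im_Cons)
    also have "\<dots> = reduce (img f x @ reduce (im f (reduce w)))" by (simp add: reduce_reduce_right)
    also have "\<dots> = reduce (im f (x # w))" using Cons by (simp add: reduce_reduce_right im_Cons)
    finally show ?thesis by simp
  qed
qed

lemma subst_reduce: "subst f (reduce w) = subst f w"
  by (simp add: subst_im im_reduce)

definition it :: "(nat \<Rightarrow> letter list) \<Rightarrow> nat \<Rightarrow> letter list \<Rightarrow> letter list" where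
  "it f n w = reduce ((subst f ^^ n) w)"

lemma it_0[simp]: "it f 0 w = reduce w" by (simp add: it_def)

lemma iter_reduce_Suc: "(subst f ^^ Suc n) (reduce w) = (subst f ^^ Suc n) w"
  by (simp only: funpow_Suc_right comp_def subst_reduce)

lemma it_reduce: "it f n (reduce w) = it f n w"
  by (cases n) (simp, simp only: it_def iter_reduce_Suc)

lemma it_Suc: "it f (Suc n) w = reduce (im f (it f n w))"
  by (simp add: it_def subst_im im_reduce)

lemma it_Suc_right: "it f (Suc n) w = it f n (im f w)"
proof -
  have "it f (Suc n) w = reduce ((subst f ^^ n) (subst f w))"
    by (simp only: it_def funpow_Suc_right comp_def)
  also have "\<dots> = it f n (reduce (im f w))" by (simp add: it_def subst_im)
  finally show ?thesis by (simp add: it_reduce)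
qed

lemma it_append: "it f n (u @ v) = reduce (it f n u @ it f n v)"
proof (induct n)
  case 0 then show ?case by (simp add: reduce_reduce_left reduce_reduce_right)
next
  case (Suc n)
  have "it f (Suc n) (u @ v) = reduce (im f (reduce (it f n u @ it f n v)))"
    by (simp add: it_Suc Suc)
  also have "\<dots> = reduce (im f (it f n u) @ im f (it f n v))" by (simp add: im_reduce)
  also have "\<dots> = reduce (it f (Suc n) u @ it f (Suc n) v)"
    by (simp add: it_Suc reduce_reduce_left reduce_reduce_right)
  finally show ?case .
qed

lemma it_inv: "it f n (inv_word w) = reduce (inv_word (it f n w))"
proof (induct n)
  case 0 then show ?case by (simp add: reduce_inv_reduce)
next
  case (Suc n)
  have "it f (Suc n) (inv_word w) = reduce (im f (reduce (inv_word (it f n w))))"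
    by (simp add: it_Suc Suc)
  also have "\<dots> = reduce (inv_word (im f (it f n w)))" by (simp add: im_reduce)
  also have "\<dots> = reduce (inv_word (it f (Suc n) w))"
    by (simp add: it_Suc reduce_inv_reduce)
  finally show ?case .
qed

lemma len_it_append: "length (it f n (u @ v)) \<le> length (it f n u) + length (it f n v)"
  using length_reduce[of "it f n u @ it f n v"] by (simp add: it_append)

lemma len_it_inv: "length (it f n (inv_word w)) \<le> length (it f n w)"
  using length_reduce[of "inv_word (it f n w)"] by (simp add: it_inv)

lemma it_Nil[simp]: "it f n [] = []"
  by (induct n) (simp_all add: it_Suc)

lemma len_it_sum: "length (it f n w) \<le> (\<Sum>x\<leftarrow>w. length (it f n [x]))"
proof (induct w)
  case Nil then show ?case by simp
next
  case (Cons x w)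
  then show ?case using len_it_append[of f n "[x]" w] by simp
qed

lemma iter_single: "(subst f ^^ n) [x] = it f n [x]"
proof (cases n)
  case 0 then show ?thesis by simp
next
  case (Suc n')
  then show ?thesis by (simp add: it_def subst_def)
qed

lemma iter_len_it: "iter_len f n g = length (it f n [(g, False)])"
  by (simp add: iter_len_def iter_single)

lemma it_closed:
  assumes "reduce w = reduce (W 0)" and "\<And>n. reduce (im f (W n)) = reduce (W (Suc n))"
  shows "it f n w = reduce (W n)"
proof (induct n)
  case 0 then show ?case using assms by simp
next
  case (Suc n)
  then show ?case using assms(2)[of n] by (simp add: it_Suc im_reduce)
qed



definition Pw :: "nat \<Rightarrow> letter list" where "Pw i = map (\<lambda>t. (t, False)) [0..<i]"
definition Rw :: "nat \<Rightarrow> nat \<Rightarrow> letter list" where "Rw m j = map (\<lambda>t. (m + t, False)) [0..<j]"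
definition Qw :: "nat \<Rightarrow> nat \<Rightarrow> letter list" where
  "Qw n i = concat (map (\<lambda>t. replicate n (t, False)) [0..<i])"

lemma Pw_0[simp]: "Pw 0 = []" by (simp add: Pw_def)
lemma Pw_Suc: "Pw (Suc i) = Pw i @ [(i, False)]" by (simp add: Pw_def)
lemma Rw_0[simp]: "Rw m 0 = []" by (simp add: Rw_def)
lemma Rw_Suc: "Rw m (Suc j) = Rw m j @ [(m + j, False)]" by (simp add: Rw_def)
lemma Qw_0[simp]: "Qw n 0 = []" by (simp add: Qw_def)
lemma Qw_Suc: "Qw n (Suc i) = Qw n i @ replicate n (i, False)" by (simp add: Qw_def)
lemma length_Pw[simp]: "length (Pw i) = i" by (simp add: Pw_def)
lemma length_Qw[simp]: "length (Qw n i) = n * i" by (induct i) (simp_all add: Qw_Suc)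
lemma set_Pw: "set (Pw i) = (\<lambda>t. (t, False)) ` {..<i}" by (auto simp: Pw_def)
lemma Rw_1: "Rw m (Suc j) = (m, False) # map (\<lambda>t. (m + t, False)) [Suc 0..<Suc j]"
  by (simp add: Rw_def upt_rec)

lemma map_upt_shift: "map h [Suc a..<Suc b] = map (h \<circ> Suc) [a..<b]"
  by (simp only: map_Suc_upt[symmetric] map_map)

lemma mA: "map genA [Suc 0..<Suc g] = Pw g"
  by (simp only: map_upt_shift) (simp add: Pw_def genA_def comp_def)

lemma mAi: "map genAinv (rev [Suc 0..<Suc g]) = inv_word (Pw g)"
  by (simp only: rev_map[symmetric] map_upt_shift)
     (simp add: Pw_def genAinv_def comp_def inv_word_def rev_map)

lemma mB: "map (genB m) [Suc 0..<Suc j] = Rw m j"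
  by (simp only: map_upt_shift) (simp add: Rw_def genB_def comp_def)

lemma phi_A: "g < m \<Longrightarrow> phi m k g = Pw g @ [(g, False)] @ inv_word (Pw g)"
  unfolding phi_def Let_def by (simp del: upt_Suc add: mA mAi genA_def)

lemma phi_B: "m \<le> g \<Longrightarrow> g < m + k \<Longrightarrow>
   phi m k g = Pw m @ Rw m (g - m + 1) @ inv_word (Pw (g - m))"
  unfolding phi_def Let_def by (simp del: upt_Suc add: mA mAi mB)

lemma phi_out: "m + k \<le> g \<Longrightarrow> phi m k g = [(g, False)]"
  by (simp add: phi_def)



lemma Qw_zero[simp]: "Qw 0 i = []" by (simp add: Qw_def)

lemma rep_shift: "replicate n x @ x # r = x # replicate n x @ r"
  by (induct n) auto

lemma conj_pow:
  "reduce (u @ concat (replicate n (x @ y @ inv_word x)) @ v)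
   = reduce (u @ x @ concat (replicate n y) @ inv_word x @ v)"
proof (induct n arbitrary: u)
  case 0 then show ?case using cancel1[of u x v] by simp
next
  case (Suc n)
  have "reduce (u @ concat (replicate (Suc n) (x @ y @ inv_word x)) @ v)
      = reduce ((u @ x @ y @ inv_word x) @ concat (replicate n (x @ y @ inv_word x)) @ v)" by simp
  also have "\<dots> = reduce ((u @ x @ y) @ inv_word x @ x @ concat (replicate n y) @ inv_word x @ v)"
    using Suc[of "u @ x @ y @ inv_word x"] by simp
  also have "\<dots> = reduce ((u @ x @ y) @ concat (replicate n y) @ inv_word x @ v)"
    by (rule cancel2)
  finally show ?case by simp
qed

lemma im_rep[simp]: "im f (replicate n x) = concat (replicate n (img f x))"
  by (induct n) (simp_all add: im_Cons)

lemma img_pos[simp]: "img f (g, False) = f g" by (simp add: img_def)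
lemma img_neg[simp]: "img f (g, True) = inv_word (f g)" by (simp add: img_def)

lemma concat_rep_single[simp]: "concat (replicate n [x]) = replicate n x"
  by (induct n) simp_all

lemma imQ: "i \<le> m \<Longrightarrow>
  reduce (im (phi m k) (Qw n i)) = reduce (Qw (Suc n) i @ inv_word (Pw i))"
proof (induct i)
  case 0 then show ?case by simp
next
  case (Suc i)
  then have im: "i < m" and IH: "reduce (im (phi m k) (Qw n i)) = reduce (Qw (Suc n) i @ inv_word (Pw i))"
    by auto
  let ?C = "concat (replicate n (Pw i @ [(i, False)] @ inv_word (Pw i)))"
  have "reduce (im (phi m k) (Qw n (Suc i))) = reduce (im (phi m k) (Qw n i) @ ?C)"
    by (simp add: Qw_Suc phi_A[OF im])
  also have "\<dots> = reduce (reduce (im (phi m k) (Qw n i)) @ ?C)" by (simp add: reduce_reduce_left)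
  also have "\<dots> = reduce ((Qw (Suc n) i @ inv_word (Pw i)) @ ?C)"
    by (simp only: IH reduce_reduce_left)
  also have "\<dots> = reduce ((Qw (Suc n) i @ inv_word (Pw i)) @ Pw i @ replicate n (i, False) @ inv_word (Pw i) @ [])"
    using conj_pow[of "Qw (Suc n) i @ inv_word (Pw i)" n "Pw i" "[(i, False)]" "[]"] by simp
  also have "\<dots> = reduce (Qw (Suc n) i @ replicate n (i, False) @ inv_word (Pw i))"
    using cancel2[of "Qw (Suc n) i" "Pw i" "replicate n (i, False) @ inv_word (Pw i)"] by simp
  also have "\<dots> = reduce ((Qw (Suc n) i @ replicate n (i, False)) @ [(i, False)] @ inv_word [(i, False)] @ inv_word (Pw i))"
    using cancel1[of "Qw (Suc n) i @ replicate n (i, False)" "[(i,False)]" "inv_word (Pw i)"] by simp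
  also have "\<dots> = reduce (Qw (Suc n) (Suc i) @ inv_word (Pw (Suc i)))"
    by (simp add: Qw_Suc Pw_Suc rep_shift)
  finally show ?case .
qed

lemma cong_conj: "reduce a = reduce a' \<Longrightarrow> reduce (a @ b @ inv_word a) = reduce (a' @ b @ inv_word a')"
proof -
  assume h: "reduce a = reduce a'"
  have "reduce (a @ b @ inv_word a) = reduce (a' @ b @ inv_word a)"
    using cong_mid[OF h, of "[]" "b @ inv_word a"] by simp
  also have "\<dots> = reduce (a' @ b @ inv_word a')"
    using cong_mid[OF cong_inv[OF h], of "a' @ b" "[]"] by simp
  finally show ?thesis .
qed

lemma phiA_closed: "g < m \<Longrightarrow>
   it (phi m k) n [(g, False)] = reduce (Qw n g @ [(g, False)] @ inv_word (Qw n g))"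
proof (rule it_closed)
  fix n assume gm: "g < m"
  have "reduce (im (phi m k) (Qw n g @ [(g, False)] @ inv_word (Qw n g)))
     = reduce (im (phi m k) (Qw n g) @ phi m k g @ inv_word (im (phi m k) (Qw n g)))"
    by simp
  also have "\<dots> = reduce ((Qw (Suc n) g @ inv_word (Pw g)) @ phi m k g @ inv_word (Qw (Suc n) g @ inv_word (Pw g)))"
    by (rule cong_conj) (simp add: imQ gm less_imp_le)
  also have "\<dots> = reduce (Qw (Suc n) g @ inv_word (Pw g) @ Pw g @ [(g, False)] @ inv_word (Pw g) @ Pw g @ inv_word (Qw (Suc n) g))"
    by (simp add: phi_A gm)
  also have "\<dots> = reduce (Qw (Suc n) g @ [(g, False)] @ inv_word (Pw g) @ Pw g @ inv_word (Qw (Suc n) g))"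
    by (rule cancel2)
  also have "\<dots> = reduce ((Qw (Suc n) g @ [(g, False)]) @ inv_word (Qw (Suc n) g))"
    using cancel2[of "Qw (Suc n) g @ [(g, False)]" "Pw g" "inv_word (Qw (Suc n) g)"] by simp
  finally show "reduce (im (phi m k) (Qw n g @ [(g, False)] @ inv_word (Qw n g))) =
         reduce (Qw (Suc n) g @ [(g, False)] @ inv_word (Qw (Suc n) g))" by simp
qed simp

lemma phiA_len: "g < m \<Longrightarrow> iter_len (phi m k) n g \<le> 2 * g * n + 1"
proof -
  assume "g < m"
  then have "iter_len (phi m k) n g = length (reduce (Qw n g @ [(g, False)] @ inv_word (Qw n g)))"
    by (simp add: iter_len_it phiA_closed)
  also have "\<dots> \<le> length (Qw n g @ [(g, False)] @ inv_word (Qw n g))" by (rule length_reduce)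
  also have "\<dots> = 2 * g * n + 1" by simp

  finally show ?thesis .
qed

lemma phi_m: "1 \<le> k \<Longrightarrow> phi m k m = Pw m @ [(m, False)]"
  by (simp add: phi_B Rw_def)

lemma phiB1_closed: "1 \<le> k \<Longrightarrow> it (phi m k) n [(m, False)] = reduce (Qw n m @ [(m, False)])"
proof (rule it_closed)
  fix n assume k: "1 \<le> k"
  have "reduce (im (phi m k) (Qw n m @ [(m, False)])) = reduce (reduce (im (phi m k) (Qw n m)) @ phi m k m)"
    by (simp add: reduce_reduce_left)
  also have "\<dots> = reduce ((Qw (Suc n) m @ inv_word (Pw m)) @ Pw m @ [(m, False)])"
    by (simp add: imQ phi_m[OF k] reduce_reduce_left)
  also have "\<dots> = reduce (Qw (Suc n) m @ [(m, False)])"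
    using cancel2[of "Qw (Suc n) m" "Pw m" "[(m, False)]"] by simp
  finally show "reduce (im (phi m k) (Qw n m @ [(m, False)])) = reduce (Qw (Suc n) m @ [(m, False)])" .
qed simp

lemma phiB1_len: "1 \<le> k \<Longrightarrow> iter_len (phi m k) n m \<le> n * m + 1"
  using length_reduce[of "Qw n m @ [(m, False)]"] by (simp add: iter_len_it phiB1_closed)



lemma grow_step:
  fixes x :: "nat \<Rightarrow> nat"
  assumes "x 0 \<le> c" and "\<And>n. x (Suc n) \<le> x n + K * (n + 1) ^ j"
  shows "x n \<le> (c + K) * (n + 1) ^ (j + 1)"
proof (induct n)
  case 0 then show ?case using assms(1) by simp
next
  case (Suc n)
  have p: "(n + 1) ^ (j + 1) + (n + 1) ^ j \<le> (n + 2) ^ (j + 1)"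
  proof -
    have "(n + 1) ^ (j + 1) + (n + 1) ^ j = (n + 2) * (n + 1) ^ j" by simp
    also have "\<dots> \<le> (n + 2) * (n + 2) ^ j" by (intro mult_le_mono2 power_mono) auto
    finally show ?thesis by simp
  qed
  have "x (Suc n) \<le> (c + K) * (n + 1) ^ (j + 1) + K * (n + 1) ^ j" using Suc assms(2)[of n] by simp
  also have "\<dots> \<le> (c + K) * (n + 1) ^ (j + 1) + (c + K) * (n + 1) ^ j" by simp
  also have "\<dots> = (c + K) * ((n + 1) ^ (j + 1) + (n + 1) ^ j)" by (simp add: algebra_simps)
  also have "\<dots> \<le> (c + K) * (n + 2) ^ (j + 1)" using p by simp
  finally show ?case by simp
qed

lemma poly_rec:
  fixes b :: "nat \<Rightarrow> nat \<Rightarrow> nat"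
  assumes b0: "\<And>n. b 0 n \<le> L * (n + 1)"
    and bt0: "\<And>t. t < k \<Longrightarrow> b t 0 \<le> L"
    and rec: "\<And>t n. 0 < t \<Longrightarrow> t < k \<Longrightarrow> b t (Suc n) \<le> (\<Sum>s\<le>t. b s n) + L * (n + 1)"
  shows "t < k \<Longrightarrow> \<exists>C. \<forall>s\<le>t. \<forall>n. b s n \<le> C * (n + 1) ^ (s + 1)"
proof (induct t)
  case 0 then show ?case using b0 by (intro exI[of _ L]) simp
next
  case (Suc t)
  then obtain C where C: "\<And>s n. s \<le> t \<Longrightarrow> b s n \<le> C * (n + 1) ^ (s + 1)" by auto
  have Ct: "b s n \<le> C * (n + 1) ^ (t + 1)" if "s \<le> t" for s n
  proof -
    have "(n + 1) ^ (s + 1) \<le> (n + 1) ^ (t + 1)" using that by (intro power_increasing) auto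
    then show ?thesis using C[OF that, of n] by (meson le_trans mult_le_mono2)
  qed
  define K where "K = (t + 1) * C + L"
  have step: "b (Suc t) (Suc n) \<le> b (Suc t) n + K * (n + 1) ^ (t + 1)" for n
  proof -
    have "b (Suc t) (Suc n) \<le> (\<Sum>s\<le>Suc t. b s n) + L * (n + 1)" using rec[of "Suc t" n] Suc by simp
    also have "(\<Sum>s\<le>Suc t. b s n) = b (Suc t) n + (\<Sum>s\<le>t. b s n)" by simp
    also have "(\<Sum>s\<le>t. b s n) \<le> (\<Sum>s\<le>t. C * (n + 1) ^ (t + 1))" by (rule sum_mono) (rule Ct, simp)
    also have "\<dots> = (t + 1) * C * (n + 1) ^ (t + 1)" by (simp only: sum_constant card_atMost of_nat_id Suc_eq_plus1 mult.assoc)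
    also have "L * (n + 1) \<le> L * (n + 1) ^ (t + 1)"
    proof -
      have "L * (n + 1) ^ 1 \<le> L * (n + 1) ^ (t + 1)" by (intro mult_le_mono2 power_increasing) auto
      then show ?thesis by (simp only: power_one_right)
    qed
    finally show ?thesis by (simp add: K_def algebra_simps)
  qed
  have G: "b (Suc t) n \<le> (L + K) * (n + 1) ^ (t + 1 + 1)" for n
    by (rule grow_step[of "b (Suc t)"]) (use bt0 Suc step in auto)
  have B: "b (Suc t) n \<le> (C + L + K) * (n + 1) ^ (Suc t + 1)" for n
  proof -
    have "b (Suc t) n \<le> (L + K) * (n + 1) ^ (Suc t + 1)" using G[of n] by simp
    also have "\<dots> \<le> (C + L + K) * (n + 1) ^ (Suc t + 1)" by (rule mult_le_mono1) simp
    finally show ?thesis .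
  qed
  have A: "b s n \<le> (C + L + K) * (n + 1) ^ (s + 1)" if "s \<le> t" for s n
  proof -
    have "b s n \<le> C * (n + 1) ^ (s + 1)" using C[OF that] .
    also have "\<dots> \<le> (C + L + K) * (n + 1) ^ (s + 1)" by (rule mult_le_mono1) simp
    finally show ?thesis .
  qed
  show ?case
  proof (intro exI allI impI)
    fix s n assume "s \<le> Suc t"
    then consider "s \<le> t" | "s = Suc t" by linarith
    then show "b s n \<le> (C + L + K) * (n + 1) ^ (s + 1)"
      by cases (use A B in auto)
  qed
qed

lemma poly_all:
  fixes b :: "nat \<Rightarrow> nat \<Rightarrow> nat"
  assumes "\<And>n. b 0 n \<le> L * (n + 1)"
    and "\<And>t. t < k \<Longrightarrow> b t 0 \<le> L"
    and "\<And>t n. 0 < t \<Longrightarrow> t < k \<Longrightarrow> b t (Suc n) \<le> (\<Sum>s\<le>t. b s n) + L * (n + 1)"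
    and "0 < k"
  shows "\<exists>C. \<forall>t<k. \<forall>n. b t n \<le> C * (n + 1) ^ k"
proof -
  obtain C where C: "\<And>s n. s \<le> k - 1 \<Longrightarrow> b s n \<le> C * (n + 1) ^ (s + 1)"
    using poly_rec[of b L k "k - 1", OF assms(1-3)] assms(4) by auto
  show ?thesis
  proof (intro exI allI impI)
    fix t n assume "t < k"
    then have "b t n \<le> C * (n + 1) ^ (t + 1)" using C by auto
    also have "(n + 1) ^ (t + 1) \<le> (n + 1) ^ k" using \<open>t < k\<close> by (intro power_increasing) auto
    finally show "b t n \<le> C * (n + 1) ^ k" by (simp add: mult_le_mono2)
  qed
qed



lemma sum_list_upt': "sum_list (map h [a..<b]) = (\<Sum>s\<in>{a..<b}. (h s :: nat))"
  by (metis sum_set_upt_conv_sum_list_nat set_upt)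

lemma len_it_Pw: "length (it f n (Pw t)) \<le> (\<Sum>s<t. iter_len f n s)"
proof -
  have "length (it f n (Pw t)) \<le> (\<Sum>x\<leftarrow>Pw t. length (it f n [x]))" by (rule len_it_sum)
  also have "\<dots> = (\<Sum>s<t. iter_len f n s)"
    by (simp add: Pw_def comp_def iter_len_it sum_list_upt' atLeast0LessThan)
  finally show ?thesis .
qed

lemma phiB_rec:
  assumes k: "k \<le> m" and t: "0 < t" "t < k"
  shows "iter_len (phi m k) (Suc n) (m + t)
     \<le> (\<Sum>s\<le>t. iter_len (phi m k) n (m + s)) + (m + 1 + k * (2 * k + 1)) * (n + 1)"
proof -
  let ?f = "phi m k"
  let ?Tl = "map (\<lambda>s. (m + s, False)) [1..<Suc t]"
  have k1: "1 \<le> k" using t by simp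
  have ph: "phi m k (m + t) = (Pw m @ [(m, False)]) @ ?Tl @ inv_word (Pw t)"
    using phi_B[of m "m + t" k] t by (simp add: Rw_1)
  have E: "iter_len ?f (Suc n) (m + t) = length (it ?f n ((Pw m @ [(m, False)]) @ ?Tl @ inv_word (Pw t)))"
    by (simp only: iter_len_it it_Suc_right im_pos ph)
  have S: "length (it ?f n ((Pw m @ [(m, False)]) @ ?Tl @ inv_word (Pw t))) \<le> length (it ?f n (Pw m @ [(m, False)])) + (length (it ?f n ?Tl) + length (it ?f n (inv_word (Pw t))))"
    by (rule order_trans[OF len_it_append add_le_mono[OF le_refl len_it_append]])
  have P1: "length (it ?f n (Pw m @ [(m, False)])) \<le> Suc n * m + 1"
  proof -
    have "it ?f n (Pw m @ [(m, False)]) = it ?f (Suc n) [(m, False)]"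
      by (simp add: it_Suc_right phi_m[OF k1])
    then show ?thesis using phiB1_len[OF k1, of m "Suc n"] by (simp add: iter_len_it)
  qed
  have P2: "length (it ?f n ?Tl) \<le> (\<Sum>s\<le>t. iter_len ?f n (m + s))"
  proof -
    have "length (it ?f n ?Tl) \<le> (\<Sum>x\<leftarrow>?Tl. length (it ?f n [x]))" by (rule len_it_sum)
    also have "\<dots> = (\<Sum>s\<in>{1..<Suc t}. iter_len ?f n (m + s))"
      by (simp add: comp_def iter_len_it sum_list_upt' del: upt_Suc)
    also have "\<dots> \<le> (\<Sum>s\<le>t. iter_len ?f n (m + s))" by (rule sum_mono2) auto
    finally show ?thesis .
  qed
  have P3: "length (it ?f n (inv_word (Pw t))) \<le> k * ((2 * k + 1) * (n + 1))"
  proof -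
    have "length (it ?f n (inv_word (Pw t))) \<le> length (it ?f n (Pw t))" by (rule len_it_inv)
    also have "\<dots> \<le> (\<Sum>s<t. iter_len ?f n s)" by (rule len_it_Pw)
    also have "\<dots> \<le> (\<Sum>s<t. (2 * k + 1) * (n + 1))"
    proof (rule sum_mono)
      fix s assume "s \<in> {..<t}"
      then have s: "s < k" "s < m" using t k by auto
      have "iter_len ?f n s \<le> 2 * s * n + 1" by (rule phiA_len[OF s(2)])
      also have "\<dots> \<le> 2 * k * n + 1" using s(1) by (simp add: mult_le_mono)
      also have "\<dots> \<le> (2 * k + 1) * (n + 1)" by (simp add: algebra_simps)
      finally show "iter_len ?f n s \<le> (2 * k + 1) * (n + 1)" .
    qed
    also have "\<dots> = t * ((2 * k + 1) * (n + 1))" by simp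
    also have "\<dots> \<le> k * ((2 * k + 1) * (n + 1))" using t by (intro mult_le_mono1) simp
    finally show ?thesis .
  qed
  have "Suc n * m + 1 + k * ((2 * k + 1) * (n + 1)) \<le> (m + 1 + k * (2 * k + 1)) * (n + 1)"
    by (simp add: algebra_simps)
  then show ?thesis using E S P1 P2 P3 by linarith
qed



definition Pr :: "nat \<Rightarrow> letter list" where "Pr i = rev (Pw i)"
definition Qn :: "nat \<Rightarrow> nat \<Rightarrow> letter list" where
  "Qn n i = concat (map (\<lambda>t. replicate n (t, True)) [0..<i])"

lemma Pr_0[simp]: "Pr 0 = []" by (simp add: Pr_def)
lemma Pr_Suc: "Pr (Suc i) = (i, False) # Pr i" by (simp add: Pr_def Pw_Suc)
lemma Qn_0[simp]: "Qn n 0 = []" by (simp add: Qn_def)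
lemma Qn_zero[simp]: "Qn 0 i = []" by (simp add: Qn_def)
lemma Qn_Suc: "Qn n (Suc i) = Qn n i @ replicate n (i, True)" by (simp add: Qn_def)
lemma length_Qn[simp]: "length (Qn n i) = n * i" by (induct i) (simp_all add: Qn_Suc)

definition psi0 :: "nat \<Rightarrow> nat \<Rightarrow> nat \<Rightarrow> letter list" where
  "psi0 m k g = (if g < m then inv_word (Pr g) @ [(g, False)] @ Pr g
     else if g = m then inv_word (Pr m) @ [(m, False)]
     else if g < m + k then inv_word (Pr (g - m - 1)) @ [(g - 1, True), (g, False)] @ Pr (g - m)
     else [(g, False)])"

lemma psi_A: "g < m \<Longrightarrow> psi0 m k g = inv_word (Pr g) @ [(g, False)] @ Pr g"
  by (simp add: psi0_def)
lemma psi_m: "psi0 m k m = inv_word (Pr m) @ [(m, False)]"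
  by (simp add: psi0_def)
lemma psi_B: "Suc t < k \<Longrightarrow> psi0 m k (m + Suc t) = inv_word (Pr t) @ [(m + t, True), (m + Suc t, False)] @ Pr (Suc t)"
  by (simp add: psi0_def)
lemma psi_out: "m + k \<le> g \<Longrightarrow> 0 < k \<Longrightarrow> psi0 m k g = [(g, False)]"
  by (simp add: psi0_def)

lemma cong_conj': "reduce a = reduce a' \<Longrightarrow> reduce (inv_word a @ b @ a) = reduce (inv_word a' @ b @ a')"
proof -
  assume h: "reduce a = reduce a'"
  show ?thesis using cong_conj[OF cong_inv[OF h], of b] by simp
qed

lemma imQn: "i \<le> m \<Longrightarrow>
  reduce (im (psi0 m k) (Qn n i)) = reduce (Qn (Suc n) i @ Pr i)"
proof (induct i)
  case 0 then show ?case by simp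
next
  case (Suc i)
  then have im: "i < m" and IH: "reduce (im (psi0 m k) (Qn n i)) = reduce (Qn (Suc n) i @ Pr i)"
    by auto
  let ?C = "concat (replicate n (inv_word (Pr i) @ [(i, True)] @ Pr i))"
  have "reduce (im (psi0 m k) (Qn n (Suc i))) = reduce (im (psi0 m k) (Qn n i) @ ?C)"
    by (simp add: Qn_Suc psi_A[OF im])
  also have "\<dots> = reduce (reduce (im (psi0 m k) (Qn n i)) @ ?C)" by (simp add: reduce_reduce_left)
  also have "\<dots> = reduce ((Qn (Suc n) i @ Pr i) @ ?C)"
    by (simp only: IH reduce_reduce_left)
  also have "\<dots> = reduce ((Qn (Suc n) i @ Pr i) @ inv_word (Pr i) @ replicate n (i, True) @ Pr i @ [])"
    using conj_pow[of "Qn (Suc n) i @ Pr i" n "inv_word (Pr i)" "[(i, True)]" "[]"] by simp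
  also have "\<dots> = reduce (Qn (Suc n) i @ replicate n (i, True) @ Pr i)"
    using cancel1[of "Qn (Suc n) i" "Pr i" "replicate n (i, True) @ Pr i"] by simp
  also have "\<dots> = reduce ((Qn (Suc n) i @ replicate n (i, True)) @ [(i,True)] @ inv_word [(i, True)] @ Pr i)"
    using cancel1[of "Qn (Suc n) i @ replicate n (i, True)" "[(i,True)]" "Pr i"] by simp
  also have "\<dots> = reduce (Qn (Suc n) (Suc i) @ Pr (Suc i))"
    by (simp add: Qn_Suc Pr_Suc rep_shift)
  finally show ?case .
qed

lemma psiA_closed: "g < m \<Longrightarrow>
   it (psi0 m k) n [(g, False)] = reduce (Qn n g @ [(g, False)] @ inv_word (Qn n g))"
proof (rule it_closed)
  fix n assume gm: "g < m"
  have "reduce (im (psi0 m k) (Qn n g @ [(g, False)] @ inv_word (Qn n g)))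
     = reduce (im (psi0 m k) (Qn n g) @ psi0 m k g @ inv_word (im (psi0 m k) (Qn n g)))"
    by simp
  also have "\<dots> = reduce ((Qn (Suc n) g @ Pr g) @ psi0 m k g @ inv_word (Qn (Suc n) g @ Pr g))"
    by (rule cong_conj) (simp add: imQn gm less_imp_le)
  also have "\<dots> = reduce (Qn (Suc n) g @ Pr g @ inv_word (Pr g) @ [(g, False)] @ Pr g @ inv_word (Pr g) @ inv_word (Qn (Suc n) g))"
    by (simp add: psi_A gm)
  also have "\<dots> = reduce (Qn (Suc n) g @ [(g, False)] @ Pr g @ inv_word (Pr g) @ inv_word (Qn (Suc n) g))"
    by (rule cancel1)
  also have "\<dots> = reduce ((Qn (Suc n) g @ [(g, False)]) @ inv_word (Qn (Suc n) g))"
    using cancel1[of "Qn (Suc n) g @ [(g, False)]" "Pr g" "inv_word (Qn (Suc n) g)"] by simp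
  finally show "reduce (im (psi0 m k) (Qn n g @ [(g, False)] @ inv_word (Qn n g))) =
         reduce (Qn (Suc n) g @ [(g, False)] @ inv_word (Qn (Suc n) g))" by simp
qed simp

lemma psiA_len: "g < m \<Longrightarrow> iter_len (psi0 m k) n g \<le> 2 * g * n + 1"
proof -
  assume "g < m"
  then have "iter_len (psi0 m k) n g = length (reduce (Qn n g @ [(g, False)] @ inv_word (Qn n g)))"
    by (simp add: iter_len_it psiA_closed)
  also have "\<dots> \<le> length (Qn n g @ [(g, False)] @ inv_word (Qn n g))" by (rule length_reduce)
  also have "\<dots> = 2 * g * n + 1" by simp
  finally show ?thesis .
qed

lemma psiB1_closed: "it (psi0 m k) n [(m, False)] = reduce (Qn n m @ [(m, False)])"
proof (rule it_closed)
  fix n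
  have "reduce (im (psi0 m k) (Qn n m @ [(m, False)])) = reduce (reduce (im (psi0 m k) (Qn n m)) @ psi0 m k m)"
    by (simp add: reduce_reduce_left)
  also have "\<dots> = reduce ((Qn (Suc n) m @ Pr m) @ inv_word (Pr m) @ [(m, False)])"
    by (simp add: imQn psi_m reduce_reduce_left)
  also have "\<dots> = reduce (Qn (Suc n) m @ [(m, False)])"
    using cancel1[of "Qn (Suc n) m" "Pr m" "[(m, False)]"] by simp
  finally show "reduce (im (psi0 m k) (Qn n m @ [(m, False)])) = reduce (Qn (Suc n) m @ [(m, False)])" .
qed simp

lemma psiB1_len: "iter_len (psi0 m k) n m \<le> n * m + 1"
  using length_reduce[of "Qn n m @ [(m, False)]"] by (simp add: iter_len_it psiB1_closed)

lemma len_it_Pr: "length (it f n (Pr t)) \<le> (\<Sum>s<t. iter_len f n s)"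
proof -
  have "length (it f n (Pr t)) \<le> (\<Sum>x\<leftarrow>Pr t. length (it f n [x]))" by (rule len_it_sum)
  also have "\<dots> = (\<Sum>x\<leftarrow>Pw t. length (it f n [x]))" by (simp add: Pr_def rev_map[symmetric] sum_list_rev)
  also have "\<dots> = (\<Sum>s<t. iter_len f n s)"
    by (simp add: Pw_def comp_def iter_len_it sum_list_upt' atLeast0LessThan)
  finally show ?thesis .
qed

lemma psiA_sum: "t \<le> k \<Longrightarrow> k \<le> m \<Longrightarrow> (\<Sum>s<t. iter_len (psi0 m k) n s) \<le> k * ((2 * k + 1) * (n + 1))"
proof -
  assume t: "t \<le> k" and k: "k \<le> m"
  have "(\<Sum>s<t. iter_len (psi0 m k) n s) \<le> (\<Sum>s<t. (2 * k + 1) * (n + 1))"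
  proof (rule sum_mono)
    fix s assume "s \<in> {..<t}"
    then have s: "s < k" "s < m" using t k by auto
    have "iter_len (psi0 m k) n s \<le> 2 * s * n + 1" by (rule psiA_len[OF s(2)])
    also have "\<dots> \<le> 2 * k * n + 1" using s(1) by (simp add: mult_le_mono)
    also have "\<dots> \<le> (2 * k + 1) * (n + 1)" by (simp add: algebra_simps)
    finally show "iter_len (psi0 m k) n s \<le> (2 * k + 1) * (n + 1)" .
  qed
  also have "\<dots> = t * ((2 * k + 1) * (n + 1))" by simp
  also have "\<dots> \<le> k * ((2 * k + 1) * (n + 1))" using t by (intro mult_le_mono1) simp
  finally show ?thesis .
qed

lemma psiB_rec:
  assumes k: "k \<le> m" and t: "0 < t" "t < k"
  shows "iter_len (psi0 m k) (Suc n) (m + t)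
     \<le> (\<Sum>s\<le>t. iter_len (psi0 m k) n (m + s)) + (m + 1 + 2 * k * (2 * k + 1)) * (n + 1)"
proof -
  let ?f = "psi0 m k"
  obtain t' where t': "t = Suc t'" using t by (cases t) auto
  have ps: "psi0 m k (m + t) = inv_word (Pr t') @ inv_word [(m + t', False)] @ [(m + t, False)] @ Pr t"
    using psi_B[of t' k m] t t' by simp
  have E: "iter_len ?f (Suc n) (m + t) = length (it ?f n (inv_word (Pr t') @ inv_word [(m + t', False)] @ [(m + t, False)] @ Pr t))"
    by (simp only: iter_len_it it_Suc_right im_pos ps)
  have S: "length (it ?f n (inv_word (Pr t') @ inv_word [(m + t', False)] @ [(m + t, False)] @ Pr t))
     \<le> length (it ?f n (inv_word (Pr t'))) + (length (it ?f n (inv_word [(m + t', False)])) + (length (it ?f n [(m + t, False)]) + length (it ?f n (Pr t))))"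
    by (rule order_trans[OF len_it_append add_le_mono[OF le_refl order_trans[OF len_it_append add_le_mono[OF le_refl len_it_append]]]])
  have P1: "length (it ?f n (inv_word (Pr t'))) \<le> k * ((2 * k + 1) * (n + 1))"
    using len_it_inv[of ?f n "Pr t'"] len_it_Pr[of ?f n t'] psiA_sum[of t' k m n] t t' k by linarith
  have P4: "length (it ?f n (Pr t)) \<le> k * ((2 * k + 1) * (n + 1))"
    using len_it_Pr[of ?f n t] psiA_sum[of t k m n] t k by linarith
  have P2: "length (it ?f n (inv_word [(m + t', False)])) \<le> iter_len ?f n (m + t')"
    using len_it_inv[of ?f n "[(m + t', False)]"] by (simp add: iter_len_it)
  have P23: "iter_len ?f n (m + t') + iter_len ?f n (m + t) \<le> (\<Sum>s\<le>t. iter_len ?f n (m + s))"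
  proof -
    have "iter_len ?f n (m + t') \<le> (\<Sum>s\<le>t'. iter_len ?f n (m + s))"
      by (rule member_le_sum) auto
    then show ?thesis using t' by simp
  qed
  have P3: "length (it ?f n [(m + t, False)]) = iter_len ?f n (m + t)" by (simp add: iter_len_it)
  have "k * ((2 * k + 1) * (n + 1)) + k * ((2 * k + 1) * (n + 1)) \<le> (m + 1 + 2 * k * (2 * k + 1)) * (n + 1)"
    by (simp add: algebra_simps)
  then show ?thesis using E S P1 P2 P23 P3 P4 by linarith
qed



lemma psi_B': "Suc t < k \<Longrightarrow> psi0 m k (Suc (m + t)) = inv_word (Pr t) @ [(m + t, True), (Suc (m + t), False)] @ Pr (Suc t)"
  using psi_B[of t k m] by simp

lemma imPw_psi: "i \<le> m \<Longrightarrow> reduce (im (psi0 m k) (Pw i)) = reduce (Pr i)"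
proof (induct i)
  case 0 then show ?case by simp
next
  case (Suc i)
  then have im: "i < m" and IH: "reduce (im (psi0 m k) (Pw i)) = reduce (Pr i)" by auto
  have "reduce (im (psi0 m k) (Pw (Suc i))) = reduce (reduce (im (psi0 m k) (Pw i)) @ psi0 m k i)"
    by (simp add: Pw_Suc reduce_reduce_left)
  also have "\<dots> = reduce (Pr i @ inv_word (Pr i) @ [(i, False)] @ Pr i)"
    by (simp only: IH reduce_reduce_left psi_A[OF im])
  also have "\<dots> = reduce (Pr (Suc i))" using cancel1[of "[]" "Pr i"] by (simp add: Pr_Suc)
  finally show ?case .
qed

lemma imPr_phi: "i \<le> m \<Longrightarrow> reduce (im (phi m k) (Pr i)) = reduce (Pw i)"
proof (induct i)
  case 0 then show ?case by simp
next
  case (Suc i)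
  then have im: "i < m" and IH: "reduce (im (phi m k) (Pr i)) = reduce (Pw i)" by auto
  have "reduce (im (phi m k) (Pr (Suc i))) = reduce (phi m k i @ reduce (im (phi m k) (Pr i)))"
    by (simp add: Pr_Suc reduce_reduce_right)
  also have "\<dots> = reduce ((Pw i @ [(i, False)]) @ inv_word (Pw i) @ Pw i @ [])"
    by (simp only: IH reduce_reduce_right) (simp add: phi_A[OF im])
  also have "\<dots> = reduce (Pw (Suc i))" by (simp only: cancel2) (simp add: Pw_Suc)
  finally show ?case .
qed

lemma imRw_psi: "t < k \<Longrightarrow> reduce (im (psi0 m k) (Rw m (Suc t))) = reduce (inv_word (Pr m) @ [(m + t, False)] @ Pr t)"
proof (induct t)
  case 0 then show ?case by (simp add: Rw_def psi_m)
next
  case (Suc t)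
  then have tk: "Suc t < k" and IH: "reduce (im (psi0 m k) (Rw m (Suc t))) = reduce (inv_word (Pr m) @ [(m + t, False)] @ Pr t)"
    by auto
  have "reduce (im (psi0 m k) (Rw m (Suc (Suc t)))) = reduce (reduce (im (psi0 m k) (Rw m (Suc t))) @ psi0 m k (m + Suc t))"
    by (simp add: Rw_Suc[of m "Suc t"] reduce_reduce_left)
  also have "\<dots> = reduce ((inv_word (Pr m) @ [(m + t, False)]) @ Pr t @ inv_word (Pr t) @ [(m + t, True), (m + Suc t, False)] @ Pr (Suc t))"
    by (simp add: IH reduce_reduce_left psi_B'[OF tk])
  also have "\<dots> = reduce ((inv_word (Pr m)) @ [(m + t, False)] @ inv_word [(m + t, False)] @ [(m + Suc t, False)] @ Pr (Suc t))"
    using cancel1[of "inv_word (Pr m) @ [(m + t, False)]" "Pr t" "[(m + t, True), (m + Suc t, False)] @ Pr (Suc t)"] by simp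
  also have "\<dots> = reduce (inv_word (Pr m) @ [(m + Suc t, False)] @ Pr (Suc t))"
    by (rule cancel1)
  finally show ?case .
qed

lemma inv1: assumes "1 \<le> k" "k \<le> m" "g < m + k"
  shows "subst (psi0 m k) (phi m k g) = [(g, False)]"
proof (cases "g < m")
  case True
  have "subst (psi0 m k) (phi m k g) = reduce (im (psi0 m k) (Pw g) @ psi0 m k g @ inv_word (im (psi0 m k) (Pw g)))"
    by (simp add: subst_im phi_A[OF True])
  also have "\<dots> = reduce (Pr g @ psi0 m k g @ inv_word (Pr g))"
    by (rule cong_conj) (simp add: imPw_psi True less_imp_le)
  also have "\<dots> = reduce (Pr g @ inv_word (Pr g) @ [(g, False)] @ Pr g @ inv_word (Pr g))"
    by (simp add: psi_A[OF True])
  also have "\<dots> = [(g, False)]" using cancel1[of "[]" "Pr g"] cancel1[of "[(g,False)]" "Pr g" "[]"] by simp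
  finally show ?thesis .
next
  case False
  then obtain t where g: "g = m + t" and t: "t < k" using assms by (metis add_less_imp_less_left le_Suc_ex not_less)
  have "subst (psi0 m k) (phi m k g) = reduce (im (psi0 m k) (Pw m) @ im (psi0 m k) (Rw m (Suc t)) @ inv_word (im (psi0 m k) (Pw t)))"
    using phi_B[of m g k] g t by (simp add: subst_im)
  also have "\<dots> = reduce (Pr m @ im (psi0 m k) (Rw m (Suc t)) @ inv_word (im (psi0 m k) (Pw t)))"
    using cong_mid[OF imPw_psi[of m m k], of "[]"] by simp
  also have "\<dots> = reduce (Pr m @ (inv_word (Pr m) @ [(m + t, False)] @ Pr t) @ inv_word (im (psi0 m k) (Pw t)))"
    by (rule cong_mid[OF imRw_psi[OF t]])
  also have "\<dots> = reduce ((Pr m @ (inv_word (Pr m) @ [(m + t, False)] @ Pr t)) @ inv_word (Pr t) @ [])"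
    using cong_mid[OF cong_inv[OF imPw_psi[of t m k]], of "Pr m @ (inv_word (Pr m) @ [(m + t, False)] @ Pr t)" "[]"] t assms
    by simp
  also have "\<dots> = [(g, False)]" using cancel1[of "[]" "Pr m"] cancel1[of "[(m + t,False)]" "Pr t" "[]"] g by simp
  finally show ?thesis .
qed

lemma inv2: assumes "1 \<le> k" "k \<le> m" "g < m + k"
  shows "subst (phi m k) (psi0 m k g) = [(g, False)]"
proof (cases "g < m")
  case True
  have "subst (phi m k) (psi0 m k g) = reduce (inv_word (im (phi m k) (Pr g)) @ phi m k g @ im (phi m k) (Pr g))"
    by (simp add: subst_im psi_A[OF True])
  also have "\<dots> = reduce (inv_word (Pw g) @ phi m k g @ Pw g)"
    by (rule cong_conj') (simp add: imPr_phi True less_imp_le)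
  also have "\<dots> = [(g, False)]" using cancel2[of "[]" "Pw g"] cancel1[of "[(g,False)]" "inv_word (Pw g)" "[]"]
    by (simp add: phi_A[OF True])
  finally show ?thesis .
next
  case False
  then obtain t where g: "g = m + t" and t: "t < k" using assms by (metis add_less_imp_less_left le_Suc_ex not_less)
  show ?thesis
  proof (cases t)
    case 0
    have "subst (phi m k) (psi0 m k g) = reduce (inv_word (im (phi m k) (Pr m)) @ phi m k m)"
      by (simp add: subst_im g 0 psi_m)
    also have "\<dots> = reduce (inv_word (Pw m) @ phi m k m @ [])"
      using cong_mid[OF cong_inv[OF imPr_phi[of m m k]], of "[]" "phi m k m"] by simp
    also have "\<dots> = [(g, False)]" using cancel2[of "[]" "Pw m" "[(m, False)]"] g 0 assms(1)
      by (simp add: phi_m)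
    finally show ?thesis .
  next
    case (Suc t')
    have tk: "Suc t' < k" using t Suc by simp
    have tm: "t' \<le> m" "Suc t' \<le> m" using tk assms by auto
    have ph1: "phi m k (m + t') = Pw m @ Rw m (Suc t') @ inv_word (Pw t')"
      using phi_B[of m "m + t'" k] tk by simp
    have ph2: "phi m k (Suc (m + t')) = Pw m @ Rw m (Suc t') @ [(m + Suc t', False)] @ inv_word (Pw (Suc t'))"
      using phi_B[of m "m + Suc t'" k] tk by (simp add: Rw_Suc[of m "Suc t'"])
    have "subst (phi m k) (psi0 m k g) = reduce (inv_word (im (phi m k) (Pr t')) @ (inv_word (phi m k (m + t')) @ phi m k (m + Suc t')) @ im (phi m k) (Pr (Suc t')))"
      by (simp add: subst_im g Suc psi_B'[OF tk])
    also have "\<dots> = reduce (inv_word (Pw t') @ (inv_word (phi m k (m + t')) @ phi m k (m + Suc t')) @ im (phi m k) (Pr (Suc t')))"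
      using cong_mid[OF cong_inv[OF imPr_phi[OF tm(1), of k]], of "[]"] by simp
    also have "\<dots> = reduce ((inv_word (Pw t') @ (inv_word (phi m k (m + t')) @ phi m k (m + Suc t'))) @ Pw (Suc t') @ [])"
      using cong_mid[OF imPr_phi[OF tm(2), of k], of "inv_word (Pw t') @ (inv_word (phi m k (m + t')) @ phi m k (m + Suc t'))" "[]"] by simp
    also have "\<dots> = reduce (inv_word (Pw t') @ Pw t' @ (inv_word (Rw m (Suc t')) @ inv_word (Pw m) @ Pw m @ Rw m (Suc t') @ [(m + Suc t', False)] @ inv_word (Pw (Suc t')) @ Pw (Suc t')))"
      by (simp add: ph1 ph2)
    also have "\<dots> = reduce (inv_word (Rw m (Suc t')) @ inv_word (Pw m) @ Pw m @ Rw m (Suc t') @ [(m + Suc t', False)] @ inv_word (Pw (Suc t')) @ Pw (Suc t'))"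
      by (rule cancel2[of "[]", simplified])
    also have "\<dots> = reduce (inv_word (Rw m (Suc t')) @ Rw m (Suc t') @ [(m + Suc t', False)] @ inv_word (Pw (Suc t')) @ Pw (Suc t'))"
      by (rule cancel2)
    also have "\<dots> = reduce ([] @ [(m + Suc t', False)] @ inv_word (Pw (Suc t')) @ Pw (Suc t'))"
      using cancel2[of "[]" "Rw m (Suc t')"] by simp
    also have "\<dots> = [(g, False)]" using cancel2[of "[(m + Suc t', False)]" "Pw (Suc t')" "[]"] g Suc by simp
    finally show ?thesis .
  qed
qed



lemma comp_id:
  assumes h: "\<And>h. subst g (f h) = [(h, False)]"
  shows "subst g (subst f w) = reduce w"
proof -
  have x: "reduce (im g (img f x)) = [x]" for x
  proof (cases x)
    case (Pair a b)
    show ?thesis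
    proof (cases b)
      case True
      have "reduce (im g (img f x)) = reduce (inv_word (reduce (im g (f a))))"
        using Pair True by (simp add: reduce_inv_reduce)
      also have "\<dots> = [x]" using h[of a] Pair True by (simp add: subst_im)
      finally show ?thesis .
    next
      case False
      then show ?thesis using h[of a] Pair by (simp add: subst_im)
    qed
  qed
  have "reduce (im g (im f w)) = reduce w"
  proof (induct w)
    case Nil then show ?case by simp
  next
    case (Cons x w)
    have "reduce (im g (im f (x # w))) = reduce (reduce (im g (img f x)) @ reduce (im g (im f w)))"
      by (simp add: im_Cons reduce_reduce_left reduce_reduce_right)
    also have "\<dots> = reduce (x # w)" using Cons x[of x] reduce_reduce_right[of "[x]" w]
      by simp
    finally show ?case .
  qed
  then show ?thesis by (simp add: subst_im im_reduce)
qed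

definition lt :: "nat \<Rightarrow> letter list \<Rightarrow> bool" where "lt N w \<longleftrightarrow> (\<forall>x\<in>set w. fst x < N)"

lemma lt_inv: "lt N (inv_word w) = lt N w"
  by (auto simp: lt_def inv_word_def inv_letter_def)

lemma lt_subst: assumes "\<And>h. h < N \<Longrightarrow> lt N (f h)" "lt N w" shows "lt N (subst f w)"
proof -
  have "lt N (im f w)" using assms(2)
  proof (induct w)
    case Nil then show ?case by (simp add: lt_def)
  next
    case (Cons x w)
    then have "fst x < N" "lt N w" by (auto simp: lt_def)
    then have "lt N (img f x)" using assms(1)[of "fst x"] by (simp add: img_def lt_inv)
    then show ?case using Cons \<open>lt N w\<close> by (auto simp: lt_def im_Cons)
  qed
  then show ?thesis using set_reduce[of "im f w"] by (auto simp: subst_im lt_def)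
qed

lemma subst_cong:
  assumes "lt N w" "\<And>h. h < N \<Longrightarrow> reduce (f h) = reduce (f' h)"
  shows "subst f w = subst f' w"
proof -
  have "reduce (im f w) = reduce (im f' w)" using assms(1)
  proof (induct w)
    case Nil then show ?case by simp
  next
    case (Cons x w)
    then have xN: "fst x < N" and w: "lt N w" by (auto simp: lt_def)
    have e: "reduce (img f x) = reduce (img f' x)"
      using assms(2)[OF xN] by (auto simp: img_def intro: cong_inv)
    have "reduce (im f (x # w)) = reduce (reduce (img f x) @ reduce (im f w))"
      by (simp add: im_Cons reduce_reduce_left reduce_reduce_right)
    also have "\<dots> = reduce (reduce (img f' x) @ reduce (im f' w))" using e Cons w by simp
    also have "\<dots> = reduce (im f' (x # w))"
      by (simp add: im_Cons reduce_reduce_left reduce_reduce_right)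
    finally show ?case .
  qed
  then show ?thesis by (simp add: subst_im)
qed

lemma iter_cong:
  assumes "\<And>h. h < N \<Longrightarrow> lt N (f' h)" "\<And>h. h < N \<Longrightarrow> reduce (f h) = reduce (f' h)" "lt N w"
  shows "(subst f ^^ n) w = (subst f' ^^ n) w \<and> lt N ((subst f' ^^ n) w)"
proof (induct n)
  case 0 then show ?case using assms(3) by simp
next
  case (Suc n)
  then have e: "(subst f ^^ n) w = (subst f' ^^ n) w" and l: "lt N ((subst f' ^^ n) w)" by auto
  have "subst f ((subst f' ^^ n) w) = subst f' ((subst f' ^^ n) w)" by (rule subst_cong[OF l assms(2)])
  moreover have "lt N (subst f' ((subst f' ^^ n) w))" by (rule lt_subst[OF assms(1) l])
  ultimately show ?case using e by simp
qed

lemma growth_cong: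
  assumes "\<And>h. h < N \<Longrightarrow> lt N (f' h)" "\<And>h. h < N \<Longrightarrow> reduce (f h) = reduce (f' h)"
  shows "growth f N n = growth f' N n"
proof -
  have "iter_len f n g = iter_len f' n g" if "g < N" for g
    using iter_cong[OF assms, where w="[(g, False)]" and n=n] that by (simp add: iter_len_def lt_def)
  then show ?thesis unfolding growth_def by (metis (no_types, lifting) image_cong lessThan_iff)
qed

lemma pow_bound: "(n + 1) ^ k \<le> 2 ^ k * n ^ k + (1::nat)"
proof (cases "n = 0")
  case True then show ?thesis by (cases k) auto
next
  case False
  then have "(n + 1) ^ k \<le> (2 * n) ^ k" by (intro power_mono) auto
  then show ?thesis by (simp add: power_mult_distrib)
qed

lemma dom_from:
  assumes N: "0 < N" and b: "\<And>g n. g < N \<Longrightarrow> iter_len f n g \<le> D * (n + 1) ^ k"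
  shows "dominated (\<lambda>n. real (growth f N n)) (\<lambda>n. real n ^ k)"
  unfolding dominated_def
proof (intro exI conjI allI)
  fix n
  have "growth f N n \<le> D * (n + 1) ^ k"
    unfolding growth_def using N b by (subst Max_le_iff) auto
  also have "\<dots> \<le> D * (2 ^ k * n ^ k + 1)" by (intro mult_le_mono2 pow_bound)
  also have "\<dots> \<le> (D * 2 ^ k + 1) * n ^ k + D" by (simp add: algebra_simps)
  finally have "real (growth f N n) \<le> real ((D * 2 ^ k + 1) * n ^ k + D)" by linarith
  then show "real (growth f N n) \<le> real (D * 2 ^ k + 1) * real n ^ k + real D" by (simp add: algebra_simps)
next
  show "0 < real (D * 2 ^ k + 1)" by (simp only: of_nat_0_less_iff)
qed simp

lemma iter_len_0: "iter_len f 0 g = 1" by (simp add: iter_len_def)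

lemma phi_bound:
  assumes "1 \<le> k" "k \<le> m"
  shows "\<exists>D. \<forall>g<m + k. \<forall>n. iter_len (phi m k) n g \<le> D * (n + 1) ^ k"
proof -
  define L where "L = m + 1 + k * (2 * k + 1)"
  have "\<exists>C. \<forall>t<k. \<forall>n. iter_len (phi m k) n (m + t) \<le> C * (n + 1) ^ k"
  proof (rule poly_all[where L = L])
    fix n
    have "iter_len (phi m k) n (m + 0) \<le> n * m + 1" using phiB1_len[OF assms(1)] by simp
    also have "\<dots> \<le> L * (n + 1)" by (simp add: L_def algebra_simps)
    finally show "iter_len (phi m k) n (m + 0) \<le> L * (n + 1)" .
  next
    fix t show "iter_len (phi m k) 0 (m + t) \<le> L" by (simp add: iter_len_0 L_def)
  next
    fix t n assume "0 < t" "t < k"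
    then show "iter_len (phi m k) (Suc n) (m + t) \<le> (\<Sum>s\<le>t. iter_len (phi m k) n (m + s)) + L * (n + 1)"
      using phiB_rec[OF assms(2)] by (simp add: L_def)
  qed (use assms in simp)
  then obtain C where C: "\<And>t n. t < k \<Longrightarrow> iter_len (phi m k) n (m + t) \<le> C * (n + 1) ^ k" by blast
  show ?thesis
  proof (intro exI allI impI)
    fix g n assume g: "g < m + k"
    show "iter_len (phi m k) n g \<le> (C + (2 * m + 1)) * (n + 1) ^ k"
    proof (cases "g < m")
      case True
      have "iter_len (phi m k) n g \<le> 2 * g * n + 1" by (rule phiA_len[OF True])
      also have "\<dots> \<le> 2 * m * n + 1" using True by (simp add: mult_le_mono)
      also have "\<dots> \<le> (2 * m + 1) * (n + 1)" by (simp add: algebra_simps)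
      also have "\<dots> \<le> (2 * m + 1) * (n + 1) ^ k"
        using power_increasing[of 1 k "n + 1"] assms by (intro mult_le_mono2) simp
      also have "\<dots> \<le> (C + (2 * m + 1)) * (n + 1) ^ k" by (intro mult_le_mono1) simp
      finally show ?thesis .
    next
      case False
      then obtain t where t: "g = m + t" "t < k" using g by (metis add_less_imp_less_left le_Suc_ex not_less)
      have "iter_len (phi m k) n g \<le> C * (n + 1) ^ k" using C t by simp
      also have "\<dots> \<le> (C + (2 * m + 1)) * (n + 1) ^ k" by (intro mult_le_mono1) simp
      finally show ?thesis .
    qed
  qed
qed

lemma psi_bound:
  assumes "1 \<le> k" "k \<le> m"
  shows "\<exists>D. \<forall>g<m + k. \<forall>n. iter_len (psi0 m k) n g \<le> D * (n + 1) ^ k"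
proof -
  define L where "L = m + 1 + 2 * k * (2 * k + 1)"
  have "\<exists>C. \<forall>t<k. \<forall>n. iter_len (psi0 m k) n (m + t) \<le> C * (n + 1) ^ k"
  proof (rule poly_all[where L = L])
    fix n
    have "iter_len (psi0 m k) n (m + 0) \<le> n * m + 1" using psiB1_len by simp
    also have "\<dots> \<le> L * (n + 1)" by (simp add: L_def algebra_simps)
    finally show "iter_len (psi0 m k) n (m + 0) \<le> L * (n + 1)" .
  next
    fix t show "iter_len (psi0 m k) 0 (m + t) \<le> L" by (simp add: iter_len_0 L_def)
  next
    fix t n assume "0 < t" "t < k"
    then show "iter_len (psi0 m k) (Suc n) (m + t) \<le> (\<Sum>s\<le>t. iter_len (psi0 m k) n (m + s)) + L * (n + 1)"
      using psiB_rec[OF assms(2)] by (simp add: L_def)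
  qed (use assms in simp)
  then obtain C where C: "\<And>t n. t < k \<Longrightarrow> iter_len (psi0 m k) n (m + t) \<le> C * (n + 1) ^ k" by blast
  show ?thesis
  proof (intro exI allI impI)
    fix g n assume g: "g < m + k"
    show "iter_len (psi0 m k) n g \<le> (C + (2 * m + 1)) * (n + 1) ^ k"
    proof (cases "g < m")
      case True
      have "iter_len (psi0 m k) n g \<le> 2 * g * n + 1" by (rule psiA_len[OF True])
      also have "\<dots> \<le> 2 * m * n + 1" using True by (simp add: mult_le_mono)
      also have "\<dots> \<le> (2 * m + 1) * (n + 1)" by (simp add: algebra_simps)
      also have "\<dots> \<le> (2 * m + 1) * (n + 1) ^ k"
        using power_increasing[of 1 k "n + 1"] assms by (intro mult_le_mono2) simp
      also have "\<dots> \<le> (C + (2 * m + 1)) * (n + 1) ^ k" by (intro mult_le_mono1) simp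
      finally show ?thesis .
    next
      case False
      then obtain t where t: "g = m + t" "t < k" using g by (metis add_less_imp_less_left le_Suc_ex not_less)
      have "iter_len (psi0 m k) n g \<le> C * (n + 1) ^ k" using C t by simp
      also have "\<dots> \<le> (C + (2 * m + 1)) * (n + 1) ^ k" by (intro mult_le_mono1) simp
      finally show ?thesis .
    qed
  qed
qed

lemma psi0_lt: "1 \<le> k \<Longrightarrow> h < m + k \<Longrightarrow> lt (m + k) (psi0 m k h)"
  by (auto simp: psi0_def lt_def Pr_def Pw_def inv_word_def)

theorem proposition8p1:
  fixes m k :: nat
  assumes "1 \<le> k" and "k \<le> m"
  shows "dominated (\<lambda>n. real (growth (phi m k) (m + k) n)) (\<lambda>n. real n ^ k)
     \<and> (\<exists>\<psi>. inverse_on (m + k) (phi m k) \<psi>)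
     \<and> (\<forall>\<psi>. inverse_on (m + k) (phi m k) \<psi> \<longrightarrow>
          dominated (\<lambda>n. real (growth \<psi> (m + k) n)) (\<lambda>n. real n ^ k))"
proof (intro conjI allI impI)
  show "dominated (\<lambda>n. real (growth (phi m k) (m + k) n)) (\<lambda>n. real n ^ k)"
    using phi_bound[OF assms] dom_from[of "m + k"] assms by force
  show "\<exists>\<psi>. inverse_on (m + k) (phi m k) \<psi>"
    using inv1[OF assms] inv2[OF assms] by (auto simp: inverse_on_def)
  fix \<psi> assume inv: "inverse_on (m + k) (phi m k) \<psi>"
  have all: "subst (psi0 m k) (phi m k h) = [(h, False)]" for h
  proof (cases "h < m + k")
    case True then show ?thesis using inv1[OF assms] by simp
  next
    case False
    then show ?thesis using assms by (simp add: phi_out psi_out subst_im)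
  qed
  have red: "reduce (\<psi> h) = reduce (psi0 m k h)" if "h < m + k" for h
  proof -
    have "reduce (\<psi> h) = subst (psi0 m k) (subst (phi m k) (\<psi> h))" using comp_id[OF all] by simp
    also have "\<dots> = subst (psi0 m k) [(h, False)]" using inv that by (simp add: inverse_on_def)
    also have "\<dots> = reduce (psi0 m k h)" by (simp add: subst_im)
    finally show ?thesis .
  qed
  have g: "growth \<psi> (m + k) n = growth (psi0 m k) (m + k) n" for n
    by (rule growth_cong[OF psi0_lt[OF assms(1)] red])
  obtain D where D: "\<forall>g<m + k. \<forall>n. iter_len (psi0 m k) n g \<le> D * (n + 1) ^ k"
    using psi_bound[OF assms] by blast
  have "dominated (\<lambda>n. real (growth (psi0 m k) (m + k) n)) (\<lambda>n. real n ^ k)"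
    by (rule dom_from[of "m + k"]) (use assms D in auto)
  then show "dominated (\<lambda>n. real (growth \<psi> (m + k) n)) (\<lambda>n. real n ^ k)" by (simp add: g)
qed

end
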